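(* Let $R$ be a local ring with stable regular maximal ideal $M$, let $R_1=E(M)$, and suppose $R\subseteq R_1$ is a quadratic extension and $R_1$ is a local ring with maximal ideal $M_1$. Let $R_2=E(M_1)$. (1) If $R_1\neq R_2$, then $M_1=MR_2$, $M_1$ is a stable ideal of $R_1$, and $R_1=R+M_1$. (2) If $R_1=R_2$, then $M_1$ is a principal ideal of $R_1$ and $R_1=R+xR$ for every $x\in R_1\setminus R$.
   Context: All rings are commutative with identity; a local ring is a ring with a unique maximal ideal (not necessarily Noetherian). $Q(R)$ is the total ring of quotients. An ideal is regular if it contains a nonzerodivisor. For a regular fractional ideal $I$ of a ring $A$ (an $A$-submodule of $Q(A)$ containing a nonzerodivisor with $bI\subseteq A$ for some nonzerodivisor $b$), $E(I)=\{q\in Q(A):qI\subseteq I\}$, and $I$ is stable if it is projective as an $E(I)$-module. An extension $R\subseteq S$ is quadratic if $xy\in xR+yR+R$ for all $x,y\in S$. *)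

theory Defs
  imports Main
begin

text \<open>Convention: all rings live inside an ambient commutative ring of type 'a.  The ambient
  type plays the role of the total ring of quotients Q(R) of the base ring R
  (assumption total_quotient_ring below).\<close>

definition subring :: "'a::comm_ring_1 set \<Rightarrow> bool" where
  "subring A \<longleftrightarrow> 0 \<in> A \<and> 1 \<in> A \<and> (\<forall>x\<in>A. \<forall>y\<in>A. x + y \<in> A \<and> x * y \<in> A \<and> - x \<in> A)"

definition nzd :: "'a::comm_ring_1 set \<Rightarrow> 'a \<Rightarrow> bool" where
  "nzd A b \<longleftrightarrow> b \<in> A \<and> (\<forall>c\<in>A. b * c = 0 \<longrightarrow> c = 0)"

definition total_quotient_ring :: "'a::comm_ring_1 set \<Rightarrow> bool" where
  "total_quotient_ring R \<longleftrightarrow> subring R \<and>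
     (\<forall>b. nzd R b \<longrightarrow> (\<exists>c. b * c = 1)) \<and>
     (\<forall>q. \<exists>a\<in>R. \<exists>b. nzd R b \<and> q * b = a)"

definition ideal :: "'a::comm_ring_1 set \<Rightarrow> 'a set \<Rightarrow> bool" where
  "ideal A I \<longleftrightarrow> I \<subseteq> A \<and> 0 \<in> I \<and> (\<forall>x\<in>I. \<forall>y\<in>I. x + y \<in> I) \<and>
     (\<forall>r\<in>A. \<forall>x\<in>I. r * x \<in> I)"

definition maximal_ideal :: "'a::comm_ring_1 set \<Rightarrow> 'a set \<Rightarrow> bool" where
  "maximal_ideal A M \<longleftrightarrow> ideal A M \<and> M \<noteq> A \<and>
     (\<forall>J. ideal A J \<longrightarrow> M \<subseteq> J \<longrightarrow> J = M \<or> J = A)"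

definition local_ring :: "'a::comm_ring_1 set \<Rightarrow> 'a set \<Rightarrow> bool" where
  "local_ring A M \<longleftrightarrow> subring A \<and> maximal_ideal A M \<and>
     (\<forall>N. maximal_ideal A N \<longrightarrow> N = M)"

definition regular_ideal :: "'a::comm_ring_1 set \<Rightarrow> 'a set \<Rightarrow> bool" where
  "regular_ideal A I \<longleftrightarrow> ideal A I \<and> (\<exists>b\<in>I. nzd A b)"

definition regular_fractional_ideal :: "'a::comm_ring_1 set \<Rightarrow> 'a set \<Rightarrow> bool" where
  "regular_fractional_ideal A I \<longleftrightarrow>
     0 \<in> I \<and> (\<forall>x\<in>I. \<forall>y\<in>I. x + y \<in> I) \<and> (\<forall>r\<in>A. \<forall>x\<in>I. r * x \<in> I) \<and>
     (\<exists>u\<in>I. \<forall>c. u * c = 0 \<longrightarrow> c = 0) \<and>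
     (\<exists>b. nzd A b \<and> (\<forall>x\<in>I. b * x \<in> A))"

definition E :: "'a::comm_ring_1 set \<Rightarrow> 'a set" where
  "E I = {q. \<forall>x\<in>I. q * x \<in> I}"

text \<open>Defined as: the canonical free presentation (free B-module on the set P)
  mapping onto P splits B-linearly, i.e. there is a B-linear map
  x \<mapsto> (coefficients f p x)_{p \<in> P} into the finitely supported
  functions P \<rightarrow> B with x = \<Sum> f p x * p (P is a direct summand of a free module).\<close>
definition projective_module :: "'a::comm_ring_1 set \<Rightarrow> 'a set \<Rightarrow> bool" where
  "projective_module B P \<longleftrightarrow>
     (\<exists>f :: 'a \<Rightarrow> 'a \<Rightarrow> 'a.
        (\<forall>p\<in>P. \<forall>x\<in>P. f p x \<in> B) \<and>
        (\<forall>p\<in>P. \<forall>x\<in>P. \<forall>y\<in>P. f p (x + y) = f p x + f p y) \<and>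
        (\<forall>p\<in>P. \<forall>r\<in>B. \<forall>x\<in>P. f p (r * x) = r * f p x) \<and>
        (\<forall>x\<in>P. finite {p\<in>P. f p x \<noteq> 0} \<and> x = (\<Sum>p\<in>{p\<in>P. f p x \<noteq> 0}. f p x * p)))"

definition stable :: "'a::comm_ring_1 set \<Rightarrow> 'a set \<Rightarrow> bool" where
  "stable A I \<longleftrightarrow> regular_fractional_ideal A I \<and> projective_module (E I) I"

definition quadratic_ext :: "'a::comm_ring_1 set \<Rightarrow> 'a set \<Rightarrow> bool" where
  "quadratic_ext R S \<longleftrightarrow> R \<subseteq> S \<and>
     (\<forall>x\<in>S. \<forall>y\<in>S. \<exists>a\<in>R. \<exists>b\<in>R. \<exists>c\<in>R. x * y = x * a + y * b + c)"

definition principal_ideal :: "'a::comm_ring_1 set \<Rightarrow> 'a set \<Rightarrow> bool" where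
  "principal_ideal A I \<longleftrightarrow> ideal A I \<and> (\<exists>x\<in>A. I = {r * x |r. r \<in> A})"

definition ideal_times :: "'a::comm_ring_1 set \<Rightarrow> 'a set \<Rightarrow> 'a set" where
  "ideal_times I J = {s. \<exists>(n::nat) f g. (\<forall>i<n. f i \<in> I \<and> g i \<in> J) \<and> s = (\<Sum>i<n. f i * g i)}"

definition ideal_sum :: "'a::comm_ring_1 set \<Rightarrow> 'a set \<Rightarrow> 'a set" where
  "ideal_sum I J = {a + b |a b. a \<in> I \<and> b \<in> J}"

end

theory Submission imports Defs begin

lemma local_unit:
  fixes A N :: "'a::comm_ring_1 set"
  assumes loc: "local_ring A N" and x: "x \<in> A" and xn: "x \<notin> N"
  shows "\<exists>y\<in>A. x * y = 1"
proof (rule ccontr)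
  assume nu: "\<not> (\<exists>y\<in>A. x * y = 1)"
  have sA: "subring A" using loc by (simp add: local_ring_def)
  define S where "S = {J. ideal A J \<and> x \<in> J \<and> 1 \<notin> J}"
  define I where "I = {x * r |r. r \<in> A}"
  have IS: "I \<in> S"
    unfolding S_def I_def ideal_def
  proof (rule CollectI, intro conjI)
    show "{x * r |r. r \<in> A} \<subseteq> A" using sA x by (auto simp: subring_def)
    show "0 \<in> {x * r |r. r \<in> A}" using sA unfolding subring_def by (metis (mono_tags, lifting) CollectI mult_zero_right)
    show "\<forall>a\<in>{x * r |r. r \<in> A}. \<forall>b\<in>{x * r |r. r \<in> A}. a + b \<in> {x * r |r. r \<in> A}"
      using sA unfolding subring_def by clarsimp (metis distrib_left)
    show "\<forall>r\<in>A. \<forall>a\<in>{x * r |r. r \<in> A}. r * a \<in> {x * r |r. r \<in> A}"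
      using sA by (auto simp: subring_def) (metis mult.left_commute)
    show "x \<in> {x * r |r. r \<in> A}" using sA unfolding subring_def by (metis (mono_tags, lifting) CollectI mult_1_right)
    show "1 \<notin> {x * r |r. r \<in> A}" using nu by auto
  qed
  have "\<exists>Mx\<in>S. \<forall>X\<in>S. Mx \<subseteq> X \<longrightarrow> X = Mx"
  proof (rule subset_Zorn_nonempty)
    show "S \<noteq> {}" using IS by auto
    fix C assume Cne: "C \<noteq> {}" and ch: "subset.chain S C"
    have CS: "C \<subseteq> S" and tot: "\<And>X Y. X \<in> C \<Longrightarrow> Y \<in> C \<Longrightarrow> X \<subseteq> Y \<or> Y \<subseteq> X"
      using ch by (auto simp: subset.chain_def)
    have addC: "u + v \<in> X" if "X \<in> C" "u \<in> X" "v \<in> X" for X u v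
    proof -
      have "X \<in> S" using CS that(1) by auto
      then show ?thesis using that by (simp add: S_def ideal_def)
    qed
    obtain X0 where X0: "X0 \<in> C" using Cne by auto
    show "\<Union>C \<in> S" unfolding S_def ideal_def
    proof (rule CollectI, intro conjI ballI)
      show "\<Union>C \<subseteq> A" using CS by (auto simp: S_def ideal_def)
      show "0 \<in> \<Union>C" using CS X0 by (auto simp: S_def ideal_def)
      show "x \<in> \<Union>C" using CS X0 by (auto simp: S_def ideal_def)
      show "1 \<notin> \<Union>C" using CS by (auto simp: S_def ideal_def)
      fix a b assume a: "a \<in> \<Union>C" and b: "b \<in> \<Union>C"
      then obtain Xa Xb where "Xa \<in> C" "a \<in> Xa" "Xb \<in> C" "b \<in> Xb" by auto
      then show "a + b \<in> \<Union>C"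
      proof (cases "Xa \<subseteq> Xb")
        case True
        then have "a + b \<in> Xb" using addC[of Xb a b] \<open>Xb \<in> C\<close> \<open>a \<in> Xa\<close> \<open>b \<in> Xb\<close> by auto
        then show ?thesis using \<open>Xb \<in> C\<close> by auto
      next
        case False
        then have "Xb \<subseteq> Xa" using tot[of Xa Xb] \<open>Xa \<in> C\<close> \<open>Xb \<in> C\<close> by auto
        then have "a + b \<in> Xa" using addC[of Xa a b] \<open>Xa \<in> C\<close> \<open>a \<in> Xa\<close> \<open>b \<in> Xb\<close> by auto
        then show ?thesis using \<open>Xa \<in> C\<close> by auto
      qed
    next
      fix r a assume r: "r \<in> A" and a: "a \<in> \<Union>C"
      then obtain Xa where "Xa \<in> C" "a \<in> Xa" by auto
      then show "r * a \<in> \<Union>C" using CS r by (auto simp: S_def ideal_def)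
    qed
  qed
  then obtain Mx where Mx: "Mx \<in> S" and mx: "\<forall>X\<in>S. Mx \<subseteq> X \<longrightarrow> X = Mx" by blast
  have "maximal_ideal A Mx"
    unfolding maximal_ideal_def
  proof (intro conjI allI impI)
    show "ideal A Mx" using Mx by (simp add: S_def)
    show "Mx \<noteq> A" using Mx sA by (auto simp: S_def subring_def)
    fix J assume J: "ideal A J" and sub: "Mx \<subseteq> J"
    show "J = Mx \<or> J = A"
    proof (cases "1 \<in> J")
      case True
      then have "J = A" using J by (auto simp: ideal_def) (metis mult.right_neutral)
      then show ?thesis by simp
    next
      case False
      then have "J \<in> S" using J sub Mx by (auto simp: S_def)
      then show ?thesis using mx sub by auto
    qed
  qed
  then have "Mx = N" using loc by (simp add: local_ring_def)
  then show False using Mx xn by (simp add: S_def)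
qed

lemma sum_in_ideal:
  assumes "ideal A I" "finite S" "\<forall>p\<in>S. g p \<in> I"
  shows "sum g S \<in> I"
  using assms(2,3)
proof (induction S rule: finite_induct)
  case empty then show ?case using assms(1) by (simp add: ideal_def)
next
  case (insert x F) then show ?case using assms(1) by (simp add: ideal_def)
qed

theorem lemma3p10:
  fixes R M M1 :: "'a::comm_ring_1 set"
  assumes Q: "total_quotient_ring R"
    and loc: "local_ring R M"
    and reg: "regular_ideal R M"
    and st: "stable R M"
    and quad: "quadratic_ext R (E M)"
    and loc1: "local_ring (E M) M1"
  shows "(E M \<noteq> E M1 \<longrightarrow>
            M1 = ideal_times M (E M1) \<and> stable (E M) M1 \<and> E M = ideal_sum R M1)
       \<and> (E M = E M1 \<longrightarrow>
            principal_ideal (E M) M1 \<and>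
            (\<forall>x\<in>E M - R. E M = {a + x * b |a b. a \<in> R \<and> b \<in> R}))"
proof -
  define R1 where "R1 = E M"
  have sR: "subring R" using loc by (simp add: local_ring_def)
  have idM: "ideal R M" and MneR: "M \<noteq> R" using loc by (auto simp: local_ring_def maximal_ideal_def)
  have sR1: "subring R1" using loc1 by (simp add: local_ring_def R1_def)
  have idM1: "ideal R1 M1" and M1neR1: "M1 \<noteq> R1" using loc1 by (auto simp: local_ring_def maximal_ideal_def R1_def)
  have RR1: "R \<subseteq> R1" using quad by (simp add: quadratic_ext_def R1_def)
  have quadr: "\<And>x y. x \<in> R1 \<Longrightarrow> y \<in> R1 \<Longrightarrow> \<exists>a\<in>R. \<exists>b\<in>R. \<exists>c\<in>R. x * y = x * a + y * b + c"
    using quad by (simp add: quadratic_ext_def R1_def)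
  have R_add: "x + y \<in> R" "x * y \<in> R" "- x \<in> R" "x - y \<in> R" if "x \<in> R" "y \<in> R" for x y
    proof -
    show "x + y \<in> R" "x * y \<in> R" "- x \<in> R" using sR that unfolding subring_def by auto
    have "- y \<in> R" using sR that unfolding subring_def by blast
    then have "x + - y \<in> R" using sR that unfolding subring_def by blast
    then show "x - y \<in> R" by (simp only: diff_conv_add_uminus)
  qed
  have R_1: "1 \<in> R" "0 \<in> R" using sR by (auto simp: subring_def)
  have R1_add: "x + y \<in> R1" "x * y \<in> R1" "- x \<in> R1" "x - y \<in> R1" if "x \<in> R1" "y \<in> R1" for x y
    proof -
    show "x + y \<in> R1" "x * y \<in> R1" "- x \<in> R1" using sR1 that unfolding subring_def by auto
    have "- y \<in> R1" using sR1 that unfolding subring_def by blast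
    then have "x + - y \<in> R1" using sR1 that unfolding subring_def by blast
    then show "x - y \<in> R1" by (simp only: diff_conv_add_uminus)
  qed
  have R1_1: "1 \<in> R1" "0 \<in> R1" using sR1 by (auto simp: subring_def)
  have MR: "M \<subseteq> R" using idM by (simp add: ideal_def)
  have MR1: "M \<subseteq> R1" using MR RR1 by auto
  have M_mul1: "r * x \<in> M" if "r \<in> R1" "x \<in> M" for r x using that by (simp add: R1_def E_def)
  have M_add: "x + y \<in> M" if "x \<in> M" "y \<in> M" for x y using idM that by (simp add: ideal_def)
  have M_0: "0 \<in> M" using idM by (simp add: ideal_def)
  have M_neg: "- x \<in> M" if "x \<in> M" for x
    using M_mul1[of "-1" x] R1_add(3)[OF R1_1(1) R1_1(1)] that by simp
  have M_diff: "x - y \<in> M" if "x \<in> M" "y \<in> M" for x y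
    using M_add[OF that(1) M_neg[OF that(2)]] by simp
  have M1R1: "M1 \<subseteq> R1" using idM1 by (simp add: ideal_def)
  have M1_mul: "r * x \<in> M1" if "r \<in> R1" "x \<in> M1" for r x using idM1 that by (simp add: ideal_def)
  have M1_add: "x + y \<in> M1" if "x \<in> M1" "y \<in> M1" for x y using idM1 that by (simp add: ideal_def)
  have M1_0: "0 \<in> M1" using idM1 by (simp add: ideal_def)
  have M1_neg: "- x \<in> M1" if "x \<in> M1" for x
    using M1_mul[of "-1" x] R1_add(3)[OF R1_1(1) R1_1(1)] that by simp
  have M1_diff: "x - y \<in> M1" if "x \<in> M1" "y \<in> M1" for x y
    using M1_add[OF that(1) M1_neg[OF that(2)]] by simp
  have one_M: "1 \<notin> M"
  proof
    assume "1 \<in> M"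
    then have "r * 1 \<in> M" if "r \<in> R" for r using idM that unfolding ideal_def by blast
    then have "R \<subseteq> M" by auto
    then show False using MR MneR by auto
  qed
  have one_M1: "1 \<notin> M1"
  proof
    assume "1 \<in> M1"
    then have "R1 \<subseteq> M1" using M1_mul[of _ 1] by auto
    then show False using M1R1 M1neR1 by auto
  qed
  have UR: "\<exists>y\<in>R. x * y = 1" if "x \<in> R" "x \<notin> M" for x using local_unit[OF loc] that by blast
  have U1: "\<exists>y\<in>R1. x * y = 1" if "x \<in> R1" "x \<notin> M1" for x
    using local_unit[OF loc1] that by (auto simp: R1_def)
  have MM1: "M \<subseteq> M1"
  proof
    fix x assume x: "x \<in> M"
    show "x \<in> M1"
    proof (rule ccontr)
      assume "x \<notin> M1"
      then obtain y where y: "y \<in> R1" "x * y = 1" using U1 x MR1 by blast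
      then have "y * x \<in> M" using M_mul1 x by blast
      then show False using y one_M by (simp add: mult.commute)
    qed
  qed
  have M1R: "r \<in> M" if rR: "r \<in> R" and rM1: "r \<in> M1" for r
  proof (rule ccontr)
    assume "r \<notin> M"
    then obtain y where y: "y \<in> R" "r * y = 1" using UR rR by blast
    then have "y * r \<in> M1" using M1_mul RR1 rM1 by blast
    then show False using y one_M1 by (simp add: mult.commute)
  qed
  obtain b where bM: "b \<in> M" and bnzd: "nzd R b" using reg by (auto simp: regular_ideal_def)
  obtain c where bc: "b * c = 1" using Q bnzd by (auto simp: total_quotient_ring_def)
  have bR1: "b \<in> R1" using bM MR1 by auto
  obtain f where f1: "\<forall>p\<in>M. \<forall>x\<in>M. f p x \<in> E M"
     and f3: "\<forall>p\<in>M. \<forall>r\<in>E M. \<forall>x\<in>M. f p (r * x) = r * f p x"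
     and f4: "\<forall>x\<in>M. finite {p\<in>M. f p x \<noteq> 0} \<and> x = (\<Sum>p\<in>{p\<in>M. f p x \<noteq> 0}. f p x * p)"
    using st unfolding stable_def projective_module_def by blast
  have swap: "f p x * y = x * f p y" if pM: "p \<in> M" and xM: "x \<in> M" and yM: "y \<in> M" for p x y
  proof -
    have xR1: "x \<in> R1" "y \<in> R1" using xM yM MR1 by auto
    have e1: "f p (b * x) = b * f p x" using f3 pM xM bR1 by (auto simp: R1_def)
    have e2: "f p (x * b) = x * f p b" using f3 pM xR1 bM by (auto simp: R1_def)
    have e3: "f p (b * y) = b * f p y" using f3 pM yM bR1 by (auto simp: R1_def)
    have e4: "f p (y * b) = y * f p b" using f3 pM xR1 bM by (auto simp: R1_def)
    have h1: "b * f p x = x * f p b" using e1 e2 by (metis mult.commute)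
    have h2: "b * f p y = y * f p b" using e3 e4 by (metis mult.commute)
    have "f p x * y = (b*c) * (f p x * y)" using bc by simp
    also have "\<dots> = c * ((b * f p x) * y)" by (simp add: ac_simps)
    also have "\<dots> = c * (x * f p b * y)" using h1 by simp
    also have "\<dots> = x * (c * (y * f p b))" by (simp add: ac_simps)
    also have "\<dots> = x * (c * (b * f p y))" using h2 by simp
    also have "\<dots> = x * ((b*c) * f p y)" by (simp add: ac_simps)
    also have "\<dots> = x * f p y" using bc by simp
    finally show ?thesis .
  qed
  define S where "S = {p\<in>M. f p b \<noteq> 0}"
  have finS: "finite S" and bsum: "b = (\<Sum>p\<in>S. f p b * p)" using f4 bM by (auto simp: S_def)
  have SM: "S \<subseteq> M" by (auto simp: S_def)
  have "1 = c * b" using bc by (simp add: mult.commute)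
  also have "\<dots> = (\<Sum>p\<in>S. c * (f p b * p))" using bsum by (metis sum_distrib_left)
  also have "\<dots> = (\<Sum>p\<in>S. f p p)"
  proof (rule sum.cong)
    fix p assume "p \<in> S"
    then have pM: "p \<in> M" using SM by auto
    have "f p b * p = b * f p p" using swap[OF pM bM pM] .
    then show "c * (f p b * p) = f p p" using bc by (metis mult.assoc mult.commute mult_1_right)
  qed simp
  finally have onesum: "1 = (\<Sum>p\<in>S. f p p)" .
  have "\<exists>p0\<in>S. f p0 p0 \<notin> M1"
  proof (rule ccontr)
    assume "\<not> ?thesis"
    then have "(\<Sum>p\<in>S. f p p) \<in> M1" using sum_in_ideal[OF idM1 finS, of "\<lambda>p. f p p"] by auto
    then show False using onesum one_M1 by simp
  qed
  then obtain m where mS: "m \<in> S" and fmM1: "f m m \<notin> M1" by blast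
  have mM: "m \<in> M" using mS SM by auto
  have fmR1: "f m m \<in> R1" using f1 mM by (auto simp: R1_def)
  obtain v where vR1: "v \<in> R1" and fv: "f m m * v = 1" using U1[OF fmR1 fmM1] by blast
  have Mgen: "\<exists>r\<in>R1. x = r * m" if xM: "x \<in> M" for x
  proof
    show "v * f m x \<in> R1" using R1_add(2)[OF vR1] f1 mM xM by (auto simp: R1_def)
    have "f m x * m = x * f m m" using swap[OF mM xM mM] .
    then show "x = v * f m x * m" using fv by (metis mult.assoc mult.commute mult_1_right)
  qed
  obtain rb where rbR1: "rb \<in> R1" and brb: "b = rb * m" using Mgen[OF bM] by blast
  define im where "im = rb * c"
  have mim: "m * im = 1" using bc brb by (simp add: im_def mult.assoc mult.left_commute)
  have Mdiv: "im * x \<in> R1" if xM: "x \<in> M" for x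
  proof -
    obtain r where "r \<in> R1" "x = r * m" using Mgen[OF xM] by blast
    moreover have "im * (r * m) = r" using mim by (metis mult.assoc mult.commute mult_1_right)
    ultimately show ?thesis by simp
  qed
  have mM1: "m \<in> M1" using mM MM1 by auto
  have Sq: "x * x \<in> M" if xM1: "x \<in> M1" for x
  proof -
    have xR1: "x \<in> R1" using xM1 M1R1 by auto
    obtain a b' c' where abc: "a \<in> R" "b' \<in> R" "c' \<in> R" and e: "x * x = x * a + x * b' + c'"
      using quadr[OF xR1 xR1] by blast
    define s where "s = a + b'"
    have sR: "s \<in> R" using R_add abc by (simp add: s_def)
    have sR1: "s \<in> R1" using sR RR1 by auto
    have xs: "x * x = x * s + c'" using e by (simp add: s_def distrib_left)
    have c_eq: "c' = x * x - x * s" using xs by simp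
    have "x * x - x * s \<in> M1" using M1_diff[OF M1_mul[OF xR1 xM1] M1_mul[OF sR1 xM1]] by (simp add: mult.commute)
    then have cM: "c' \<in> M" using M1R abc(3) c_eq by auto
    show ?thesis
    proof (cases "s \<in> M")
      case True
      then have "x * s \<in> M" using M_mul1[OF xR1 True] by simp
      then show ?thesis using xs M_add cM by auto
    next
      case False
      have "x - s \<notin> M1"
      proof
        assume "x - s \<in> M1"
        then have "x - (x - s) \<in> M1" using M1_diff[OF xM1] by blast
        then have "s \<in> M1" by simp
        then show False using M1R sR False by auto
      qed
      then obtain w where w: "w \<in> R1" "(x - s) * w = 1" using U1 R1_add(4)[OF xR1 sR1] by blast
      have xc: "x * (x - s) = c'" using xs by (simp add: algebra_simps)
      have "x = x * ((x - s) * w)" using w by simp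
      also have "\<dots> = w * (x * (x - s))" by (simp add: ac_simps)
      also have "\<dots> = w * c'" using xc by simp
      finally have "x \<in> M" using M_mul1 w cM by auto
      then show ?thesis using M_mul1 xR1 by auto
    qed
  qed
  have Prod: "x * y \<in> M" if xM1: "x \<in> M1" and yM1: "y \<in> M1" for x y
  proof -
    have xR1: "x \<in> R1" and yR1: "y \<in> R1" using xM1 yM1 M1R1 by auto
    obtain a b' c' where abc: "a \<in> R" "b' \<in> R" "c' \<in> R" and e: "x * y = x * a + y * b' + c'"
      using quadr[OF xR1 yR1] by blast
    have aR1: "a \<in> R1" and bR1': "b' \<in> R1" using abc RR1 by auto
    have c_eq: "c' = x * y - x * a - y * b'" using e by simp
    have "x * y - x * a - y * b' \<in> M1"
      using M1_diff[OF M1_diff[OF M1_mul[OF xR1 yM1] M1_mul[OF aR1 xM1]] M1_mul[OF bR1' yM1]]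
      by (simp add: mult.commute)
    then have cM: "c' \<in> M" using M1R abc(3) c_eq by auto
    have xc: "x * c' \<in> M" "y * c' \<in> M" using M_mul1 xR1 yR1 cM by auto
    have h1: "(x * y) * b' \<in> M"
    proof -
      have "(x * y) * b' = y * (x * x) - a * (x * x) - x * c'"
      proof -
        have "x * (x * y) = x * (x * a + y * b' + c')" using e by simp
        then show ?thesis by (simp add: algebra_simps)
      qed
      moreover have "y * (x * x) \<in> M" "a * (x * x) \<in> M" using M_mul1 Sq xM1 yR1 aR1 by auto
      ultimately show ?thesis using M_diff xc by auto
    qed
    have h2: "(x * y) * a \<in> M"
    proof -
      have "(x * y) * a = x * (y * y) - b' * (y * y) - y * c'"
      proof -
        have "y * (x * y) = y * (x * a + y * b' + c')" using e by simp
        then show ?thesis by (simp add: algebra_simps)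
      qed
      moreover have "x * (y * y) \<in> M" "b' * (y * y) \<in> M" using M_mul1 Sq yM1 xR1 bR1' by auto
      ultimately show ?thesis using M_diff xc by auto
    qed
    show ?thesis
    proof (cases "b' \<in> M")
      case False
      then obtain z where z: "z \<in> R" "b' * z = 1" using UR abc by blast
      have "z * ((x * y) * b') = (x * y) * (b' * z)" by (simp add: ac_simps)
      then have xyz: "x * y = z * ((x * y) * b')" using z by simp
      have zR1: "z \<in> R1" using z RR1 by auto
      show ?thesis by (subst xyz) (rule M_mul1[OF zR1 h1])
    next
      case bM': True
      show ?thesis
      proof (cases "a \<in> M")
        case False
        then obtain z where z: "z \<in> R" "a * z = 1" using UR abc by blast
        have "z * ((x * y) * a) = (x * y) * (a * z)" by (simp add: ac_simps)
      then have xyz: "x * y = z * ((x * y) * a)" using z by simp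
      have zR1: "z \<in> R1" using z RR1 by auto
      show ?thesis by (subst xyz) (rule M_mul1[OF zR1 h2])
      next
        case True
        have "x * a \<in> M" "y * b' \<in> M" using M_mul1 xR1 yR1 True bM' by auto
        then show ?thesis using e M_add cM by auto
      qed
    qed
  qed
  have Nonres: "n \<in> M" if xR1: "x \<in> R1" and nx: "\<not> (\<exists>r\<in>R. \<exists>n\<in>M1. x = r + n)"
    and nM1: "n \<in> M1" for x n
  proof -
    have nR1: "n \<in> R1" using nM1 M1R1 by auto
    obtain a b' c' where abc: "a \<in> R" "b' \<in> R" "c' \<in> R" and e: "x * n = x * a + n * b' + c'"
      using quadr[OF xR1 nR1] by blast
    have aR1: "a \<in> R1" and bR1': "b' \<in> R1" using abc RR1 by auto
    have xac_eq: "x * a + c' = x * n - b' * n" using e by (simp add: algebra_simps)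
    have xac: "x * a + c' \<in> M1" using M1_diff[OF M1_mul[OF xR1 nM1] M1_mul[OF bR1' nM1]] xac_eq by simp
    have aM: "a \<in> M"
    proof (rule ccontr)
      assume "a \<notin> M"
      then obtain z where z: "z \<in> R" "a * z = 1" using UR abc by blast
      have zR1: "z \<in> R1" using z RR1 by auto
      have "z * (x * a + c') \<in> M1" using M1_mul[OF zR1 xac] .
      moreover have "- (c' * z) \<in> R" using R_add z abc by auto
      moreover have "x = - (c' * z) + z * (x * a + c')"
      proof -
        have "z * (x * a + c') = x * (a * z) + c' * z" by (simp add: algebra_simps)
        then show ?thesis using z by simp
      qed
      ultimately show False using nx by blast
    qed
    have xaM: "x * a \<in> M" using M_mul1[OF xR1 aM] .
    have "x * a \<in> M1" using xaM MM1 by auto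
    from M1_diff[OF xac this] have "c' \<in> M1" by simp
    then have cM: "c' \<in> M" using M1R abc by auto
    have "(x - b') * n = x * a + c'" using e by (simp add: algebra_simps)
    then have xbn: "(x - b') * n \<in> M" using M_add xaM cM by auto
    have "x - b' \<notin> M1"
    proof
      assume "x - b' \<in> M1"
      moreover have "x = b' + (x - b')" by simp
      ultimately show False using nx abc by blast
    qed
    then obtain w where w: "w \<in> R1" "(x - b') * w = 1" using U1 R1_add(4)[OF xR1 bR1'] by blast
    have nn: "n = w * ((x - b') * n)" using w by (simp add: ac_simps)
    show ?thesis by (subst nn) (rule M_mul1[OF w(1) xbn])
  qed
  have JR1: "j * n \<in> R1" if jm: "j * m \<in> M1" and nM1: "n \<in> M1" for j n
  proof -
    have "(j * m) * n \<in> M" using Prod jm nM1 by blast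
    then have "im * ((j * m) * n) \<in> R1" using Mdiv by blast
    moreover have "im * ((j * m) * n) = j * n"
    proof -
      have "im * ((j * m) * n) = (m * im) * (j * n)" by (simp add: ac_simps)
      then show ?thesis using mim by simp
    qed
    ultimately show ?thesis by simp
  qed
  define P where "P \<longleftrightarrow> (\<forall>j. j * m \<in> M1 \<longrightarrow> (\<forall>n\<in>M1. j * n \<in> M1))"
  have PE: "im * n \<in> E M1" if P and nM1: "n \<in> M1" for n
  proof -
    have "(im * n) * m = n" using mim by (metis mult.commute mult.left_commute mult_1_right)
    then have "(im * n) * m \<in> M1" using nM1 by simp
    then show ?thesis using \<open>P\<close> unfolding P_def E_def by blast
  qed
  have R1E: "R1 \<subseteq> E M1" using M1_mul by (auto simp: E_def)
  have notP: "\<exists>g\<in>M1. (\<forall>n\<in>M1. \<exists>r\<in>R1. n = r * g) \<and> E M1 = R1" if nP: "\<not> P"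
  proof -
    obtain j n where jm: "j * m \<in> M1" and nM1: "n \<in> M1" and jn: "j * n \<notin> M1"
      using nP unfolding P_def by blast
    have jnR1: "j * n \<in> R1" using JR1 jm nM1 by blast
    obtain w where w: "w \<in> R1" "(j * n) * w = 1" using U1[OF jnR1 jn] by blast
    have gen: "\<exists>r\<in>R1. n' = r * n" if n'M1: "n' \<in> M1" for n'
    proof
      show "w * (j * n') \<in> R1" using R1_add(2)[OF w(1) JR1[OF jm n'M1]] .
      have "w * (j * n') * n = n' * ((j * n) * w)" by (simp add: ac_simps)
      then show "n' = w * (j * n') * n" using w by simp
    qed
    have "E M1 \<subseteq> R1"
    proof
      fix q assume "q \<in> E M1"
      then have "q * n \<in> M1" using nM1 by (simp add: E_def)
      then obtain s where s: "s \<in> R1" "q * n = s * n" using gen by blast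
      obtain t where t: "t \<in> R1" "m = t * n" using gen mM1 by blast
      have "q = q * (m * im)" using mim by simp
      also have "\<dots> = (q * n) * (t * im)" using t by (simp add: ac_simps)
      also have "\<dots> = (s * n) * (t * im)" using s by simp
      also have "\<dots> = s * (m * im)" using t by (simp add: ac_simps)
      also have "\<dots> = s" using mim by simp
      finally show "q \<in> R1" using s by simp
    qed
    then show ?thesis using R1E gen nM1 by blast
  qed
  have part1: "M1 = ideal_times M (E M1) \<and> stable R1 M1 \<and> R1 = ideal_sum R M1" if ne: "R1 \<noteq> E M1"
  proof -
    have HP: P using notP ne by auto
    have "\<not> M1 \<subseteq> M"
    proof
      assume "M1 \<subseteq> M"
      then have "M1 = M" using MM1 by auto
      then show False using ne by (simp add: R1_def)
    qed
    then obtain n0 where n0: "n0 \<in> M1" "n0 \<notin> M" by blast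
    have allsum: "\<exists>r\<in>R. \<exists>n\<in>M1. x = r + n" if "x \<in> R1" for x
      using Nonres[OF that _ n0(1)] n0(2) by blast
    have A: "M1 = ideal_times M (E M1)"
    proof
      show "M1 \<subseteq> ideal_times M (E M1)"
      proof
        fix n assume n: "n \<in> M1"
        have "im * n \<in> E M1" using PE HP n by blast
        then have c1: "\<forall>i<(1::nat). (\<lambda>_. m) i \<in> M \<and> (\<lambda>_. im * n) i \<in> E M1" using mM by auto
        have "m * (im * n) = (m * im) * n" by (simp add: ac_simps)
        then have c2: "n = (\<Sum>i<(1::nat). (\<lambda>_. m) i * (\<lambda>_. im * n) i)"
          using mim by simp
        have "\<exists>(k::nat) f g. (\<forall>i<k. f i \<in> M \<and> g i \<in> E M1) \<and> n = (\<Sum>i<k. f i * g i)"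
          using c1 c2 by (intro exI[of _ "1::nat"] exI[of _ "\<lambda>_. m"] exI[of _ "\<lambda>_. im * n"] conjI)
        then show "n \<in> ideal_times M (E M1)" unfolding ideal_times_def by simp
      qed
      show "ideal_times M (E M1) \<subseteq> M1"
      proof
        fix s assume "s \<in> ideal_times M (E M1)"
        then have "\<exists>(k::nat) f g. (\<forall>i<k. f i \<in> M \<and> g i \<in> E M1) \<and> s = (\<Sum>i<k. f i * g i)"
          unfolding ideal_times_def by simp
        then obtain k :: nat and f g where fg: "\<forall>i<k. f i \<in> M \<and> g i \<in> E M1" and s: "s = (\<Sum>i<k. f i * g i)"
          by blast
        have "\<forall>i\<in>{..<k}. f i * g i \<in> M1"
        proof
          fix i assume "i \<in> {..<k}"
          then have "f i \<in> M1" "g i \<in> E M1" using fg MM1 by auto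
          then have "g i * f i \<in> M1" by (simp add: E_def)
          then show "f i * g i \<in> M1" by (simp add: mult.commute)
        qed
        then show "s \<in> M1" using sum_in_ideal[OF idM1, of "{..<k}"] s by auto
      qed
    qed
    have mnz: "\<forall>c'. m * c' = 0 \<longrightarrow> c' = 0"
    proof (intro allI impI)
      fix c' assume "m * c' = 0"
      have "c' = (m * im) * c'" using mim by simp
      also have "\<dots> = im * (m * c')" by (simp add: ac_simps)
      also have "\<dots> = 0" using \<open>m * c' = 0\<close> by simp
      finally show "c' = 0" .
    qed
    have rfi: "regular_fractional_ideal R1 M1"
      unfolding regular_fractional_ideal_def
    proof (intro conjI)
      show "0 \<in> M1" by (rule M1_0)
      show "\<forall>x\<in>M1. \<forall>y\<in>M1. x + y \<in> M1" using M1_add by blast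
      show "\<forall>r\<in>R1. \<forall>x\<in>M1. r * x \<in> M1" using M1_mul by blast
      show "\<exists>u\<in>M1. \<forall>c. u * c = 0 \<longrightarrow> c = 0" using mM1 mnz by blast
      have "nzd R1 1" using R1_1 by (simp add: nzd_def)
      moreover have "\<forall>x\<in>M1. 1 * x \<in> R1" using M1R1 by auto
      ultimately show "\<exists>b. nzd R1 b \<and> (\<forall>x\<in>M1. b * x \<in> R1)" by blast
    qed
    define F where "F = (\<lambda>p x. if p = m then im * x else (0::'a))"
    have pm: "projective_module (E M1) M1"
      unfolding projective_module_def
    proof (rule exI[of _ F], intro conjI ballI)
      fix p x assume p: "p \<in> M1" and x: "x \<in> M1"
      show "F p x \<in> E M1" using PE[OF HP x] M1_0 by (auto simp: F_def E_def)
    next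
      fix p x y assume "p \<in> M1" "x \<in> M1" "y \<in> M1"
      show "F p (x + y) = F p x + F p y" by (simp add: F_def distrib_left)
    next
      fix p r x assume "p \<in> M1" "r \<in> E M1" "x \<in> M1"
      show "F p (r * x) = r * F p x" by (simp add: F_def mult.left_commute)
    next
      fix x assume x: "x \<in> M1"
      show "finite {p \<in> M1. F p x \<noteq> 0}"
        by (rule finite_subset[of _ "{m}"]) (auto simp: F_def)
      show "x = (\<Sum>p\<in>{p \<in> M1. F p x \<noteq> 0}. F p x * p)"
      proof (cases "im * x = 0")
        case True
        have "x = (m * im) * x" using mim by simp
        also have "\<dots> = m * (im * x)" by (simp add: ac_simps)
        finally have "x = 0" using True by simp
        then show ?thesis by (simp add: F_def)
      next
        case False
        then have "{p \<in> M1. F p x \<noteq> 0} = {m}" using mM1 by (auto simp: F_def)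
        then have "(\<Sum>p\<in>{p \<in> M1. F p x \<noteq> 0}. F p x * p) = (im * x) * m" by (simp add: F_def)
        also have "\<dots> = (m * im) * x" by (simp add: ac_simps)
        finally show ?thesis using mim by simp
      qed
    qed
    have B: "stable R1 M1" using rfi pm by (simp add: stable_def)
    have C: "R1 = ideal_sum R M1"
    proof
      show "R1 \<subseteq> ideal_sum R M1" using allsum unfolding ideal_sum_def by blast
      show "ideal_sum R M1 \<subseteq> R1" unfolding ideal_sum_def using RR1 M1R1 R1_add(1) by blast
    qed
    show ?thesis using A B C by blast
  qed
  have part2: "principal_ideal R1 M1 \<and> (\<forall>x\<in>R1 - R. R1 = {a + x * b |a b. a \<in> R \<and> b \<in> R})"
    if eq: "R1 = E M1"
  proof -
    have PM: "M1 \<subseteq> M" if HP: P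
    proof
      fix n assume n: "n \<in> M1"
      have "im * n \<in> R1" using PE[OF HP n] eq by simp
      moreover have "n = (im * n) * m" using mim by (metis mult.commute mult.left_commute mult_1_right)
      ultimately show "n \<in> M" using M_mul1 mM by metis
    qed
    have pr: "\<exists>g\<in>R1. M1 = {r * g |r. r \<in> R1}"
    proof (cases P)
      case True
      then have "M1 = M" using PM MM1 by auto
      moreover have "M = {r * m |r. r \<in> R1}" using Mgen M_mul1 mM by blast
      ultimately show ?thesis using mM MR1 by blast
    next
      case False
      then obtain g where g: "g \<in> M1" "\<forall>n\<in>M1. \<exists>r\<in>R1. n = r * g" using notP by blast
      have "M1 = {r * g |r. r \<in> R1}" using g M1_mul by blast
      then show ?thesis using g M1R1 by blast
    qed
    have princ: "principal_ideal R1 M1" using pr idM1 by (simp add: principal_ideal_def)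
    have gen2: "R1 = {a + x * b |a b. a \<in> R \<and> b \<in> R}" if xR1: "x \<in> R1" and xR: "x \<notin> R" for x
    proof
      show "{a + x * b |a b. a \<in> R \<and> b \<in> R} \<subseteq> R1"
        using R1_add(1,2) RR1 xR1 by blast
      show "R1 \<subseteq> {a + x * b |a b. a \<in> R \<and> b \<in> R}"
      proof
        fix y assume yR1: "y \<in> R1"
        have "\<exists>a b. y = a + x * b \<and> a \<in> R \<and> b \<in> R"
        proof (cases "M1 \<subseteq> M")
          case True
          obtain a1 b1 t where ab1: "a1 \<in> R" "b1 \<in> R" "t \<in> R" and ex: "x * x = x * a1 + x * b1 + t"
            using quadr[OF xR1 xR1] by blast
          define s where "s = a1 + b1"
          have sR: "s \<in> R" using R_add ab1 by (simp add: s_def)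
          have xx: "x * x = x * s + t" using ex by (simp add: s_def distrib_left)
          obtain a' b' c' where abc: "a' \<in> R" "b' \<in> R" "c' \<in> R" and e: "x * y = x * a' + y * b' + c'"
            using quadr[OF xR1 yR1] by blast
          define u where "u = x - b'"
          have uR1: "u \<in> R1" using R1_add(4) xR1 abc RR1 by (auto simp: u_def)
          have uR: "u \<notin> R"
          proof
            assume "u \<in> R"
            then have "u + b' \<in> R" using R_add abc by auto
            then show False using xR by (simp add: u_def)
          qed
          obtain a2 b2 t' where ab2: "a2 \<in> R" "b2 \<in> R" "t' \<in> R" and eu: "u * u = u * a2 + u * b2 + t'"
            using quadr[OF uR1 uR1] by blast
          define s' where "s' = a2 + b2"
          have s'R: "s' \<in> R" using R_add ab2 by (simp add: s'_def)
          have uu: "u * (u - s') = t'" using eu by (simp add: s'_def algebra_simps)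
          have uM1: "u \<notin> M1" using uR True MR by auto
          have tM: "t' \<notin> M"
          proof
            assume tM: "t' \<in> M"
            obtain w where w: "w \<in> R1" "u * w = 1" using U1[OF uR1 uM1] by blast
            have "w * (u * (u - s')) = (u * w) * (u - s')" by (simp add: ac_simps)
            then have us: "u - s' = w * t'" using w uu by simp
            have "u - s' \<in> M" by (subst us) (rule M_mul1[OF w(1) tM])
            then have "u - s' \<in> R" using MR by auto
            from R_add(1)[OF this s'R] have "(u - s') + s' \<in> R" .
            then show False using uR by simp
          qed
          obtain z where z: "z \<in> R" "t' * z = 1" using UR ab2 tM by blast
          define A where "A = z * (t * a' - c' * (b' + s'))"
          define B where "B = z * (s * a' + c' - a' * (b' + s'))"
          have AR: "A \<in> R" unfolding A_def using R_add z abc ab1 s'R by auto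
          have BR: "B \<in> R" unfolding B_def using R_add z abc sR s'R by auto
          have uy: "u * y = x * a' + c'" using e by (simp add: u_def algebra_simps)
          have "y * (u * (u - s')) * z = y * (t' * z)" using uu by (simp add: mult.assoc)
          then have "y = y * (u * (u - s')) * z" using z by simp
          also have "\<dots> = (u * y) * (u - s') * z" by (simp add: ac_simps)
          also have "\<dots> = (x * a' + c') * (x - b' - s') * z" using uy by (simp add: u_def)
          also have "\<dots> = z * (a' * (x * x) + x * c' - x * a' * (b' + s') - c' * (b' + s'))"
            by (simp add: algebra_simps)
          also have "\<dots> = z * (a' * (x * s + t) + x * c' - x * a' * (b' + s') - c' * (b' + s'))"
            using xx by simp
          also have "\<dots> = A + x * B" by (simp add: A_def B_def algebra_simps)
          finally show ?thesis using AR BR by blast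
        next
          case False
          then obtain n1 where n1: "n1 \<in> M1" "n1 \<notin> M" by blast
          have allsum: "\<exists>r\<in>R. \<exists>n\<in>M1. w = r + n" if "w \<in> R1" for w
            using Nonres[OF that _ n1(1)] n1(2) by blast
          have nP: "\<not> P" using PM False by blast
          obtain g where g: "g \<in> M1" "\<forall>n\<in>M1. \<exists>r\<in>R1. n = r * g" using notP[OF nP] by blast
          have gR1: "g \<in> R1" using g M1R1 by auto
          have key: "\<exists>\<alpha>\<in>R. \<exists>\<mu>\<in>M. n' = g * \<alpha> + \<mu>" if n': "n' \<in> M1" for n'
          proof -
            obtain r' where r': "r' \<in> R1" "n' = r' * g" using g n' by blast
            obtain \<alpha> e where ae: "\<alpha> \<in> R" "e \<in> M1" "r' = \<alpha> + e" using allsum[OF r'(1)] by blast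
            have "e * g \<in> M" using Prod ae g by blast
            moreover have "n' = g * \<alpha> + e * g" using r' ae by (simp add: algebra_simps)
            ultimately show ?thesis using ae by blast
          qed
          obtain r0 n0 where rn0: "r0 \<in> R" "n0 \<in> M1" "x = r0 + n0" using allsum[OF xR1] by blast
          have n0M: "n0 \<notin> M"
          proof
            assume "n0 \<in> M"
            then have "r0 + n0 \<in> R" using MR R_add rn0 by auto
            then show False using xR rn0 by simp
          qed
          obtain a0 e0 where ae0: "a0 \<in> R" "e0 \<in> M" "n0 = g * a0 + e0" using key[OF rn0(2)] by blast
          have a0M: "a0 \<notin> M"
          proof
            assume "a0 \<in> M"
            then have "g * a0 \<in> M" using M_mul1 gR1 by blast
            then have "g * a0 + e0 \<in> M" using M_add ae0 by blast
            then show False using n0M ae0 by simp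
          qed
          obtain z where z: "z \<in> R" "a0 * z = 1" using UR ae0 a0M by blast
          obtain r n' where rn: "r \<in> R" "n' \<in> M1" "y = r + n'" using allsum[OF yR1] by blast
          obtain \<alpha> \<mu> where am: "\<alpha> \<in> R" "\<mu> \<in> M" "n' = g * \<alpha> + \<mu>" using key[OF rn(2)] by blast
          define A where "A = r - z * \<alpha> * r0 - z * \<alpha> * e0 + \<mu>"
          define B where "B = z * \<alpha>"
          have e0R: "e0 \<in> R" "\<mu> \<in> R" using MR ae0 am by auto
          have za: "z * \<alpha> \<in> R" using R_add(2)[OF z(1) am(1)] .
          have t1: "z * \<alpha> * r0 \<in> R" using R_add(2)[OF za rn0(1)] .
          have t2: "z * \<alpha> * e0 \<in> R" using R_add(2)[OF za e0R(1)] .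
          have AR: "A \<in> R" unfolding A_def
            using R_add(1)[OF R_add(4)[OF R_add(4)[OF rn(1) t1] t2] e0R(2)] .
          have BR: "B \<in> R" unfolding B_def using R_add z am by auto
          have "A + x * B = r + \<mu> + g * \<alpha> * (a0 * z)"
            using rn0 ae0 by (simp add: A_def B_def algebra_simps)
          also have "\<dots> = y" using z rn am by (simp add: algebra_simps)
          finally show ?thesis using AR BR by metis
        qed
        then show "y \<in> {a + x * b |a b. a \<in> R \<and> b \<in> R}" by blast
      qed
    qed
    show ?thesis using princ gen2 by blast
  qed
  show ?thesis unfolding R1_def[symmetric] using part1 part2 by blast
qed
end
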